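(* Let $G=(V,E)$ be an infinite vertex-transitive simple graph of bounded degree, with cyclic connective constant $\mu_G$. Let $\alpha_0$ be the unique solution of the equation $$\alpha + \tfrac12 \log\big(1 + e^{-2\alpha}\big) = \log \mu_G .$$ Then for all $\alpha > \alpha_0$ there exist constants $C_0(\alpha), c_0(\alpha) > 0$ such that for every finite $U \subset V$, every $z \in U$ and every $\ell \in \mathbb N$, $$\mathbb{P}_{U}\big( \| \gamma_z \| > \ell \big) \leq C_0(\alpha) \exp\big( - c_0(\alpha)\, \ell \big).$$ Moreover, $C_0(\alpha)$ and $c_0(\alpha)$ can be chosen so that $\lim_{\alpha \to \infty} c_0(\alpha)/\alpha = 1$ and $\limsup_{\alpha \to \infty} C_0(\alpha) < \infty$.
   Context: For a finite simple graph with vertex set $U$ (here the subgraph of $G$ induced by $U$), a permutation on $U$ is a bijection $\pi:U\to U$ such that for every $x\in U$ either $\pi(x)=x$ or $\{x,\pi(x)\}$ is an edge. Let $\mathcal S_U$ be the set of such permutations, $\mathcal H_U(\pi)=\sum_{x\in U}\mathbb 1\{\pi(x)\neq x\}$, and for $\alpha\in\mathbb R$ let $\mathbb P_U(\pi)=e^{-\alpha\mathcal H_U(\pi)}/Z(U)$, where $Z(U)=\sum_{\pi\in\mathcal S_U}e^{-\alpha\mathcal H_U(\pi)}$. For $z\in U$, $\gamma_z(\pi)$ is the cycle of $\pi$ containing $z$, i.e. the directed graph with vertices $\{\pi^i(z):i\in\mathbb N\}$ and edges $(\pi^i(z),\pi^{i+1}(z))$; $\|\gamma_z\|$ is its number of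 edges (it is $0$ if $\pi(z)=z$). A cycle in $G$ is a finite directed subgraph with vertex set enumerated as $x^1,\dots,x^n$ and edge set $\{(x^i,x^{i+1}):1\le i\le n-1\}\cup\{(x^n,x^1)\}$. Fixing a vertex $0$ (origin), $SAP_n$ denotes the set of cycles in $G$ starting from $0$ with $n$ edges ($SAP_0=\{0\}$), and the cyclic connective constant is $\mu_G=\limsup_{n\to\infty}|SAP_n|^{1/n}$. *)

theory Defs
  imports "HOL-Analysis.Analysis" "HOL-Combinatorics.Permutations"
begin

text \<open>Simple graphs on vertex type 'v (vertex set = UNIV) given by an edge relation E.\<close>

definition simple_graph :: "('v \<Rightarrow> 'v \<Rightarrow> bool) \<Rightarrow> bool" where
  "simple_graph E \<longleftrightarrow> (\<forall>x y. E x y \<longrightarrow> E y x) \<and> (\<forall>x. \<not> E x x)"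

definition bounded_degree :: "('v \<Rightarrow> 'v \<Rightarrow> bool) \<Rightarrow> bool" where
  "bounded_degree E \<longleftrightarrow> (\<exists>D::nat. \<forall>x. finite {y. E x y} \<and> card {y. E x y} \<le> D)"

definition graph_automorphism :: "('v \<Rightarrow> 'v \<Rightarrow> bool) \<Rightarrow> ('v \<Rightarrow> 'v) \<Rightarrow> bool" where
  "graph_automorphism E \<phi> \<longleftrightarrow> bij \<phi> \<and> (\<forall>x y. E x y \<longleftrightarrow> E (\<phi> x) (\<phi> y))"

definition vertex_transitive :: "('v \<Rightarrow> 'v \<Rightarrow> bool) \<Rightarrow> bool" where
  "vertex_transitive E \<longleftrightarrow> (\<forall>x y. \<exists>\<phi>. graph_automorphism E \<phi> \<and> \<phi> x = y)"

text \<open>Cycles in G starting at origin o with n edges, encoded by their vertex enumeration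
  x^1 = o, ..., x^n (distinct), edges (x^i,x^(i+1)) and (x^n,x^1). SAP_0 = {o}.\<close>

definition SAP :: "('v \<Rightarrow> 'v \<Rightarrow> bool) \<Rightarrow> 'v \<Rightarrow> nat \<Rightarrow> 'v list set" where
  "SAP E x0 n = (if n = 0 then {[x0]} else
     {xs. length xs = n \<and> distinct xs \<and> xs ! 0 = x0 \<and>
          (\<forall>i. Suc i < n \<longrightarrow> E (xs ! i) (xs ! Suc i)) \<and> E (xs ! (n - 1)) (xs ! 0)})"

definition cyclic_connective_constant :: "('v \<Rightarrow> 'v \<Rightarrow> bool) \<Rightarrow> 'v \<Rightarrow> real" where
  "cyclic_connective_constant E x0 =
     real_of_ereal (limsup (\<lambda>n. ereal (root n (real (card (SAP E x0 n))))))"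

definition perms_on :: "('v \<Rightarrow> 'v \<Rightarrow> bool) \<Rightarrow> 'v set \<Rightarrow> ('v \<Rightarrow> 'v) set" where
  "perms_on E U = {\<pi>. \<pi> permutes U \<and> (\<forall>x\<in>U. \<pi> x = x \<or> E x (\<pi> x))}"

definition ham :: "'v set \<Rightarrow> ('v \<Rightarrow> 'v) \<Rightarrow> nat" where
  "ham U \<pi> = card {x\<in>U. \<pi> x \<noteq> x}"

definition partition_fn :: "('v \<Rightarrow> 'v \<Rightarrow> bool) \<Rightarrow> real \<Rightarrow> 'v set \<Rightarrow> real" where
  "partition_fn E \<alpha> U = (\<Sum>\<pi>\<in>perms_on E U. exp (- \<alpha> * real (ham U \<pi>)))"

definition perm_prob :: "('v \<Rightarrow> 'v \<Rightarrow> bool) \<Rightarrow> real \<Rightarrow> 'v set \<Rightarrow> (('v \<Rightarrow> 'v) \<Rightarrow> bool) \<Rightarrow> real" where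
  "perm_prob E \<alpha> U A =
     (\<Sum>\<pi>\<in>{\<pi>\<in>perms_on E U. A \<pi>}. exp (- \<alpha> * real (ham U \<pi>))) / partition_fn E \<alpha> U"

definition cycle_len :: "('v \<Rightarrow> 'v) \<Rightarrow> 'v \<Rightarrow> nat" where
  "cycle_len \<pi> z = (if \<pi> z = z then 0 else card {(\<pi> ^^ i) z | i. True})"

end

theory Submission
  imports Defs "HOL-Combinatorics.Orbits" "HOL-Real_Asymp.Real_Asymp"
begin


definition walks :: "('v \<Rightarrow> 'v \<Rightarrow> bool) \<Rightarrow> 'v \<Rightarrow> nat \<Rightarrow> 'v list set" where
  "walks E x m = {xs. length xs = Suc m \<and> xs!0 = x \<and> (\<forall>i. Suc i < Suc m \<longrightarrow> E (xs!i) (xs!Suc i))}"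

lemma walks_finite:
  assumes "bounded_degree E" shows "finite (walks E x m)"
proof (induction m arbitrary: x)
  case 0
  have "walks E x 0 \<subseteq> {[x]}" unfolding walks_def
    by (auto simp: length_Suc_conv)
  then show ?case using finite_subset by blast
next
  case (Suc m)
  have fin: "finite {y. E x y}" using assms unfolding bounded_degree_def by blast
  have "walks E x (Suc m) \<subseteq> (\<lambda>(y,ys). x#ys) ` (SIGMA y:{y. E x y}. walks E y m)"
  proof
    fix xs assume a: "xs \<in> walks E x (Suc m)"
    then obtain u ys where xs: "xs = u # ys" unfolding walks_def by (cases xs) auto
    have "u = x" using a xs unfolding walks_def by auto
    have e: "E (xs!i) (xs!Suc i)" if "Suc i < Suc (Suc m)" for i using a that unfolding walks_def by auto
    have "length ys = Suc m" using a xs unfolding walks_def by auto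
    then obtain y ys' where ys: "ys = y # ys'" by (cases ys) auto
    have "E x y" using e[of 0] xs ys \<open>u = x\<close> by simp
    moreover have "ys \<in> walks E y m" unfolding walks_def
    proof (intro CollectI conjI allI impI)
      show "length ys = Suc m" by fact
      show "ys ! 0 = y" using ys by simp
      fix i assume "Suc i < Suc m" then show "E (ys ! i) (ys ! Suc i)" using e[of "Suc i"] xs by simp
    qed
    ultimately show "xs \<in> (\<lambda>(y,ys). x#ys) ` (SIGMA y:{y. E x y}. walks E y m)"
      using xs \<open>u = x\<close> ys by force
  qed
  moreover have "finite (SIGMA y:{y. E x y}. walks E y m)" using fin Suc by blast
  ultimately show ?case using finite_subset by blast
qed

lemma SAP_finite:
  assumes "bounded_degree E" shows "finite (SAP E x n)"
proof (cases n)
  case 0 then show ?thesis by (simp add: SAP_def)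
next
  case (Suc m)
  have "SAP E x n \<subseteq> walks E x m" using Suc unfolding SAP_def walks_def by auto
  then show ?thesis using walks_finite[OF assms] finite_subset by blast
qed



lemma SAP_card_le:
  assumes "bounded_degree E" "vertex_transitive E"
  shows "card (SAP E z n) \<le> card (SAP E x0 n)"
proof -
  obtain \<psi> where aut: "graph_automorphism E \<psi>" and pz: "\<psi> z = x0"
    using assms(2) unfolding vertex_transitive_def by blast
  have bij: "bij \<psi>" and ed: "\<And>x y. E x y \<longleftrightarrow> E (\<psi> x) (\<psi> y)"
    using aut unfolding graph_automorphism_def by auto
  have inj: "inj \<psi>" using bij bij_is_inj by blast
  have "map \<psi> ` SAP E z n \<subseteq> SAP E x0 n"
  proof
    fix ys assume "ys \<in> map \<psi> ` SAP E z n"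
    then obtain xs where xs: "xs \<in> SAP E z n" "ys = map \<psi> xs" by blast
    show "ys \<in> SAP E x0 n"
    proof (cases "n = 0")
      case True then show ?thesis using xs pz by (simp add: SAP_def)
    next
      case False
      then show ?thesis using xs pz inj ed unfolding SAP_def
        by (auto simp: distinct_map inj_on_def) 
    qed
  qed
  moreover have "inj_on (map \<psi>) (SAP E z n)"
    using inj by (simp add: inj_on_def inj_map_eq_map)
  ultimately show ?thesis
    using card_inj_on_le SAP_finite[OF assms(1)] by blast
qed



lemma funpow_in_U: assumes "\<pi> permutes U" "z \<in> U" shows "(\<pi>^^i) z \<in> U"
  by (induction i) (auto simp: permutes_in_image[OF assms(1)] assms(2))

lemma orbit_facts:
  assumes "\<pi> permutes U" "finite U" "z \<in> U" "\<pi> z \<noteq> z"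
  shows "cycle_len \<pi> z \<ge> 2" "(\<pi>^^cycle_len \<pi> z) z = z"
    "inj_on (\<lambda>i. (\<pi>^^i) z) {0..<cycle_len \<pi> z}"
    "{(\<pi>^^i) z | i. True} = (\<lambda>i. (\<pi>^^i) z) ` {0..<cycle_len \<pi> z}"
proof -
  have perm: "permutation \<pi>" using assms permutation_permutes by blast
  have zo: "z \<in> orbit \<pi> z" using permutation_self_in_orbit[OF perm] .
  define p where "p = funpow_dist1 \<pi> z z"
  have o1: "orbit \<pi> z = (\<lambda>i. (\<pi>^^i) z) ` {0..<p}" using orbit_conv_funpow_dist1[OF zo] p_def by simp
  have o2: "orbit \<pi> z = {(\<pi>^^i) z | i. True}" using orbit_altdef_self_in[OF zo] .
  have inj: "inj_on (\<lambda>i. (\<pi>^^i) z) {0..<p}" using inj_on_funpow_dist1[OF zo] p_def by simp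
  have cl: "cycle_len \<pi> z = p"
    unfolding cycle_len_def using assms(4) o1 o2 inj by (simp add: card_image)
  have pz: "(\<pi>^^p) z = z" using funpow_dist1_prop[OF zo] p_def by simp
  show "(\<pi>^^cycle_len \<pi> z) z = z" using cl pz by simp
  show "inj_on (\<lambda>i. (\<pi>^^i) z) {0..<cycle_len \<pi> z}" using cl inj by simp
  show "{(\<pi>^^i) z | i. True} = (\<lambda>i. (\<pi>^^i) z) ` {0..<cycle_len \<pi> z}" using o1 o2 cl by simp
  have "p \<noteq> 1" using pz assms(4) by auto
  moreover have "p \<noteq> 0" using p_def by simp
  ultimately show "cycle_len \<pi> z \<ge> 2" using cl by simp
qed



lemma sum_pow_card: "(\<Sum>S\<in>Pow {..<k}. (x::real) ^ card S) = (1 + x) ^ k"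
proof (induction k)
  case 0 then show ?case by simp
next
  case (Suc k)
  have d: "Pow {..<k} \<inter> insert k ` Pow {..<k} = {}" by auto
  have inj: "inj_on (insert k) (Pow {..<k})" by (rule inj_onI) (subst (asm) insert_ident; auto)
  have "(\<Sum>S\<in>Pow {..<Suc k}. x ^ card S) = (\<Sum>S\<in>Pow {..<k}. x ^ card S) + (\<Sum>S\<in>insert k ` Pow {..<k}. x ^ card S)"
    unfolding lessThan_Suc Pow_insert by (rule sum.union_disjoint) (use d in auto)
  also have "(\<Sum>S\<in>insert k ` Pow {..<k}. x ^ card S) = (\<Sum>S\<in>Pow {..<k}. x * x ^ card S)"
  proof -
    have r: "(\<Sum>S\<in>insert k ` Pow {..<k}. x ^ card S) = (\<Sum>S\<in>Pow {..<k}. x ^ card (insert k S))"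
      using sum.reindex[OF inj, of "\<lambda>S. x ^ card S"] by simp
    have c: "x ^ card (insert k S) = x * x ^ card S" if "S \<in> Pow {..<k}" for S
    proof -
      have "k \<notin> S" "finite S" using that finite_subset by auto
      then show ?thesis by simp
    qed
    show ?thesis unfolding r by (rule sum.cong) (auto simp: c)
  qed
  finally show ?case using Suc by (simp add: sum_distrib_left[symmetric] algebra_simps)
qed

context
  fixes E :: "'v \<Rightarrow> 'v \<Rightarrow> bool" and U :: "'v set" and xs :: "'v list"
  assumes sym: "\<And>x y. E x y \<Longrightarrow> E y x"
    and finU: "finite U" and dist: "distinct xs" and sub: "set xs \<subseteq> U"
    and len2: "length xs \<ge> 2"
    and path: "\<And>i. Suc i < length xs \<Longrightarrow> E (xs!i) (xs!Suc i)"
begin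

definition "idx y = (THE j. j < length xs \<and> xs!j = y)"
definition partner :: "nat \<Rightarrow> nat" where "partner j = (if even j then Suc j else j - 1)"
definition "T S y = (if y \<in> set xs \<and> idx y div 2 \<in> S then xs ! partner (idx y) else y)"

lemma idx_nth: "j < length xs \<Longrightarrow> idx (xs!j) = j"
  unfolding idx_def using dist by (auto simp: nth_eq_iff_index_eq)

lemma partner_div: "partner j div 2 = j div 2"
  unfolding partner_def by (cases "even j") (auto elim!: oddE)

lemma partner_partner: "partner (partner j) = j"
  unfolding partner_def by (cases "even j") (auto elim!: oddE)

lemma partner_neq: "partner j \<noteq> j"
  unfolding partner_def by (cases "even j") (auto elim!: oddE)

lemma partner_lt: "S \<subseteq> {..<length xs div 2} \<Longrightarrow> j div 2 \<in> S \<Longrightarrow> partner j < length xs"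
  unfolding partner_def by (cases "even j") (auto elim!: oddE evenE)

lemma T_nth: "j < length xs \<Longrightarrow> T S (xs!j) = (if j div 2 \<in> S then xs ! partner j else xs!j)"
  unfolding T_def by (simp add: idx_nth)

lemma T_in: assumes "S \<subseteq> {..<length xs div 2}" "y \<in> set xs" shows "T S y \<in> set xs"
proof -
  obtain j where j: "j < length xs" "y = xs!j" using assms(2) by (auto simp: in_set_conv_nth)
  show ?thesis using j T_nth partner_lt[OF assms(1)] by auto
qed

lemma T_invol: assumes "S \<subseteq> {..<length xs div 2}" "y \<in> set xs" shows "T S (T S y) = y"
proof -
  obtain j where j: "j < length xs" "y = xs!j" using assms(2) by (auto simp: in_set_conv_nth)
  show ?thesis using j T_nth partner_lt[OF assms(1)] partner_div partner_partner by auto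
qed

lemma T_moves: assumes "S \<subseteq> {..<length xs div 2}" "j < length xs"
  shows "T S (xs!j) \<noteq> xs!j \<longleftrightarrow> j div 2 \<in> S"
  using assms T_nth partner_lt[OF assms(1)] partner_neq dist by (auto simp: nth_eq_iff_index_eq)

lemma T_edge: assumes "S \<subseteq> {..<length xs div 2}" "y \<in> set xs" "T S y \<noteq> y" shows "E y (T S y)"
proof -
  obtain j where j: "j < length xs" "y = xs!j" using assms(2) by (auto simp: in_set_conv_nth)
  have jS: "j div 2 \<in> S" using T_moves[OF assms(1) j(1)] j assms(3) by simp
  have pl: "partner j < length xs" using partner_lt[OF assms(1) jS] .
  show ?thesis
  proof (cases "even j")
    case True then show ?thesis using j jS pl path[of j] T_nth by (simp add: partner_def)
  next
    case False
    then obtain i where i: "j = Suc (2*i)" by (auto elim!: oddE)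
    have "E (xs!(2*i)) (xs!j)" using path[of "2*i"] i j by simp
    then show ?thesis using j jS T_nth i sym by (simp add: partner_def)
  qed
qed

definition "F = {\<pi> \<in> perms_on E U. \<forall>i<length xs. \<pi> (xs!i) = xs!(Suc i mod length xs)}"
definition "Phi \<pi> S y = (if y \<in> set xs then T S y else \<pi> y)"

lemma len_pos: "0 < length xs" using len2 by linarith

lemma mod_lt: "k mod length xs < length xs"
  using len_pos by (rule mod_less_divisor)

lemma F_permutes: "\<pi> \<in> F \<Longrightarrow> \<pi> permutes U"
  unfolding F_def perms_on_def by auto

lemma F_step: "\<pi> \<in> F \<Longrightarrow> j < length xs \<Longrightarrow> \<pi> (xs!j) = xs!(Suc j mod length xs)"
  unfolding F_def by auto

lemma F_set_iff: assumes "\<pi> \<in> F" shows "\<pi> y \<in> set xs \<longleftrightarrow> y \<in> set xs"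
proof
  assume "y \<in> set xs"
  then obtain j where j: "j < length xs" "y = xs!j" by (auto simp: in_set_conv_nth)
  then show "\<pi> y \<in> set xs" using F_step[OF assms j(1)] mod_lt by auto
next
  assume "\<pi> y \<in> set xs"
  then obtain j where j: "j < length xs" "\<pi> y = xs!j" by (auto simp: in_set_conv_nth)
  define i where "i = (j + length xs - 1) mod length xs"
  have il: "i < length xs" using mod_lt i_def by simp
  have "Suc i mod length xs = j"
  proof (cases j)
    case 0 then show ?thesis using len_pos i_def by simp
  next
    case (Suc j') then show ?thesis using len2 i_def j(1) by simp
  qed
  then have "\<pi> (xs!i) = \<pi> y" using F_step[OF assms il] j by simp
  then have "y = xs!i" using permutes_inj[OF F_permutes[OF assms]] by (auto dest: injD)
  then show "y \<in> set xs" using il by simp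
qed

lemma F_moves: assumes "\<pi> \<in> F" "y \<in> set xs" shows "\<pi> y \<noteq> y"
proof -
  obtain j where j: "j < length xs" "y = xs!j" using assms(2) by (auto simp: in_set_conv_nth)
  have "Suc j mod length xs \<noteq> j"
  proof (cases "Suc j < length xs")
    case True then show ?thesis by simp
  next
    case False then have "Suc j = length xs" using j by simp
    then show ?thesis using len2 by simp
  qed
  moreover have "Suc j mod length xs < length xs" using mod_lt by simp
  ultimately show ?thesis using F_step[OF assms(1) j(1)] j dist by (simp add: nth_eq_iff_index_eq)
qed

lemma Phi_perms: assumes "\<pi> \<in> F" "S \<subseteq> {..<length xs div 2}" shows "Phi \<pi> S \<in> perms_on E U"
proof -
  have pp: "\<pi> permutes U" using F_permutes[OF assms(1)] .
  have injp: "inj \<pi>" using permutes_inj[OF pp] .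
  have inj: "inj_on (Phi \<pi> S) U"
  proof (rule inj_onI)
    fix a b assume ab: "a \<in> U" "b \<in> U" "Phi \<pi> S a = Phi \<pi> S b"
    show "a = b"
    proof (cases "a \<in> set xs"; cases "b \<in> set xs")
      assume "a \<in> set xs" "b \<in> set xs"
      then show ?thesis using ab T_invol[OF assms(2)] unfolding Phi_def by metis
    next
      assume "a \<in> set xs" "b \<notin> set xs"
      then show ?thesis using ab T_in[OF assms(2)] F_set_iff[OF assms(1)] unfolding Phi_def by metis
    next
      assume "a \<notin> set xs" "b \<in> set xs"
      then show ?thesis using ab T_in[OF assms(2)] F_set_iff[OF assms(1)] unfolding Phi_def by metis
    next
      assume "a \<notin> set xs" "b \<notin> set xs"
      then show ?thesis using ab injp unfolding Phi_def by (auto dest: injD)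
    qed
  qed
  have img: "Phi \<pi> S ` U \<subseteq> U"
    using T_in[OF assms(2)] sub permutes_in_image[OF pp] unfolding Phi_def by auto
  have "bij_betw (Phi \<pi> S) U U" using endo_inj_surj[OF finU img inj] inj by (simp add: bij_betw_def)
  moreover have "\<And>y. y \<notin> U \<Longrightarrow> Phi \<pi> S y = y"
    using sub permutes_not_in[OF pp] unfolding Phi_def by auto
  ultimately have "Phi \<pi> S permutes U" by (rule bij_imp_permutes)
  moreover have "\<forall>y\<in>U. Phi \<pi> S y = y \<or> E y (Phi \<pi> S y)"
  proof
    fix y assume y: "y \<in> U"
    show "Phi \<pi> S y = y \<or> E y (Phi \<pi> S y)"
    proof (cases "y \<in> set xs")
      case True then show ?thesis using T_edge[OF assms(2)] unfolding Phi_def by auto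
    next
      case False then show ?thesis using assms(1) y unfolding Phi_def F_def perms_on_def by auto
    qed
  qed
  ultimately show ?thesis unfolding perms_on_def by blast
qed

lemma card_J: assumes "S \<subseteq> {..<length xs div 2}"
  shows "card {j. j < length xs \<and> j div 2 \<in> S} = 2 * card S"
proof -
  have fS: "finite S" using assms finite_subset by blast
  have eq: "{j. j < length xs \<and> j div 2 \<in> S} = (\<lambda>i. 2*i) ` S \<union> (\<lambda>i. Suc (2*i)) ` S"
  proof (rule set_eqI, rule iffI)
    fix j assume "j \<in> {j. j < length xs \<and> j div 2 \<in> S}"
    then have "j div 2 \<in> S" by simp
    then show "j \<in> (\<lambda>i. 2*i) ` S \<union> (\<lambda>i. Suc (2*i)) ` S"
      by (cases "even j") (auto elim!: evenE oddE)
  next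
    fix j assume "j \<in> (\<lambda>i. 2*i) ` S \<union> (\<lambda>i. Suc (2*i)) ` S"
    then obtain i where i: "i \<in> S" "j = 2*i \<or> j = Suc (2*i)" by blast
    then have "i < length xs div 2" using assms by auto
    then show "j \<in> {j. j < length xs \<and> j div 2 \<in> S}" using i by auto
  qed
  have "card ((\<lambda>i. 2*i) ` S \<union> (\<lambda>i. Suc (2*i)) ` S) = card ((\<lambda>i. 2*i) ` S) + card ((\<lambda>i. Suc (2*i)) ` S)"
    using fS by (intro card_Un_disjoint) (auto, presburger)
  also have "\<dots> = card S + card S"
    by (subst card_image, simp add: inj_on_def)+ simp
  finally show ?thesis using eq by simp
qed

lemma Phi_ham: assumes "\<pi> \<in> F" "S \<subseteq> {..<length xs div 2}"
  shows "ham U (Phi \<pi> S) + length xs = ham U \<pi> + 2 * card S"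
proof -
  define R where "R = {y \<in> U. y \<notin> set xs \<and> \<pi> y \<noteq> y}"
  define J where "J = {j. j < length xs \<and> j div 2 \<in> S}"
  have fR: "finite R" using finU R_def by simp
  have e1: "{y\<in>U. \<pi> y \<noteq> y} = R \<union> set xs"
    using F_moves[OF assms(1)] sub R_def by auto
  have e2: "{y\<in>U. Phi \<pi> S y \<noteq> y} = R \<union> (\<lambda>j. xs!j) ` J"
  proof (rule set_eqI, rule iffI)
    fix y assume y: "y \<in> {y\<in>U. Phi \<pi> S y \<noteq> y}"
    show "y \<in> R \<union> (\<lambda>j. xs!j) ` J"
    proof (cases "y \<in> set xs")
      case True
      then obtain j where j: "j < length xs" "y = xs!j" by (auto simp: in_set_conv_nth)
      then show ?thesis using y True T_moves[OF assms(2) j(1)] unfolding J_def Phi_def by auto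
    next
      case False then show ?thesis using y unfolding R_def Phi_def by auto
    qed
  next
    fix y assume y: "y \<in> R \<union> (\<lambda>j. xs!j) ` J"
    show "y \<in> {y\<in>U. Phi \<pi> S y \<noteq> y}"
    proof (cases "y \<in> R")
      case True then show ?thesis unfolding R_def Phi_def by auto
    next
      case False
      then obtain j where j: "j \<in> J" "y = xs!j" using y by auto
      have jl: "j < length xs" using j J_def by auto
      then show ?thesis using j T_moves[OF assms(2) jl] sub unfolding J_def Phi_def by auto
    qed
  qed
  have "card {y\<in>U. \<pi> y \<noteq> y} = card R + length xs"
    unfolding e1 by (subst card_Un_disjoint) (auto simp: fR finU R_def distinct_card[OF dist])
  moreover have "card {y\<in>U. Phi \<pi> S y \<noteq> y} = card R + 2 * card S"
  proof -
    have inj: "inj_on (\<lambda>j. xs!j) J" using dist unfolding J_def inj_on_def by (auto simp: nth_eq_iff_index_eq)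
    have "card ((\<lambda>j. xs!j) ` J) = 2 * card S" using card_image[OF inj] card_J[OF assms(2)] J_def by simp
    moreover have "R \<inter> (\<lambda>j. xs!j) ` J = {}" unfolding R_def J_def by auto
    moreover have "finite J" unfolding J_def by simp
    ultimately show ?thesis unfolding e2 by (subst card_Un_disjoint) (auto simp: fR)
  qed
  ultimately show ?thesis unfolding ham_def by simp
qed

lemma Phi_inj: "inj_on (\<lambda>(\<pi>, S). Phi \<pi> S) (F \<times> Pow {..<length xs div 2})"
proof (rule inj_onI)
  fix p q assume p: "p \<in> F \<times> Pow {..<length xs div 2}" and q: "q \<in> F \<times> Pow {..<length xs div 2}"
    and e: "(\<lambda>(\<pi>, S). Phi \<pi> S) p = (\<lambda>(\<pi>, S). Phi \<pi> S) q"
  obtain \<pi> S where pd: "p = (\<pi>, S)" by (cases p)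
  obtain \<pi>' S' where qd: "q = (\<pi>', S')" by (cases q)
  have a: "\<pi> \<in> F" "S \<subseteq> {..<length xs div 2}" "\<pi>' \<in> F" "S' \<subseteq> {..<length xs div 2}"
    using p q pd qd by auto
  have eq: "Phi \<pi> S = Phi \<pi>' S'" using e pd qd by simp
  have "\<pi> y = \<pi>' y" for y
  proof (cases "y \<in> set xs")
    case True
    then obtain j where j: "j < length xs" "y = xs!j" by (auto simp: in_set_conv_nth)
    then show ?thesis using F_step[OF a(1) j(1)] F_step[OF a(3) j(1)] by simp
  next
    case False then show ?thesis using fun_cong[OF eq, of y] unfolding Phi_def by simp
  qed
  then have h1: "\<pi> = \<pi>'" by auto
  have "S = S'"
  proof (rule set_eqI)
    fix i
    have iff: "i \<in> A \<longleftrightarrow> i < length xs div 2 \<and> T A (xs!(2*i)) \<noteq> xs!(2*i)"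
      if "A \<subseteq> {..<length xs div 2}" for A
    proof (cases "i < length xs div 2")
      case True
      then have "2*i < length xs" by linarith
      then show ?thesis using T_moves[OF that, of "2*i"] True by simp
    next
      case False then show ?thesis using that by auto
    qed
    have "T S (xs!(2*i)) = T S' (xs!(2*i))" if il: "i < length xs div 2"
    proof -
      have "2*i < length xs" using il by linarith
      then have "xs!(2*i) \<in> set xs" by simp
      then show ?thesis using fun_cong[OF eq, of "xs!(2*i)"] unfolding Phi_def by simp
    qed
    then show "i \<in> S \<longleftrightarrow> i \<in> S'" using iff[OF a(2)] iff[OF a(4)] by auto
  qed
  then show "p = q" using h1 pd qd by simp
qed

lemma finite_perms: "finite (perms_on E U)"
  using finite_permutations[OF finU] unfolding perms_on_def by (rule rev_finite_subset) auto

lemma fiber_bound: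
  fixes \<alpha> :: real
  shows "(\<Sum>\<pi>\<in>F. exp (- \<alpha> * real (ham U \<pi>))) * exp (\<alpha> * real (length xs)) * (1 + exp (-2*\<alpha>)) ^ (length xs div 2)
     \<le> partition_fn E \<alpha> U"
proof -
  let ?w = "\<lambda>\<pi>. exp (- \<alpha> * real (ham U \<pi>))"
  let ?P = "Pow {..<length xs div 2}"
  have fF: "finite F" using finite_perms unfolding F_def by (rule rev_finite_subset) auto
  have wphi: "?w (Phi \<pi> S) = ?w \<pi> * exp (\<alpha> * real (length xs)) * exp (-2*\<alpha>) ^ card S"
    if "\<pi> \<in> F" "S \<in> ?P" for \<pi> S
  proof -
    have h: "real (ham U (Phi \<pi> S)) = real (ham U \<pi>) + 2 * real (card S) - real (length xs)"
    proof -
      have hh: "ham U (Phi \<pi> S) + length xs = ham U \<pi> + 2 * card S" using Phi_ham[OF that(1)] that(2) by simp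
      have "real (ham U (Phi \<pi> S)) + real (length xs) = real (ham U \<pi>) + 2 * real (card S)"
        using arg_cong[of _ _ real, OF hh] by simp
      then show ?thesis by linarith
    qed
    have "?w (Phi \<pi> S) = exp (- \<alpha> * real (ham U \<pi>) + \<alpha> * real (length xs) + (-2*\<alpha>) * real (card S))"
      by (simp add: h algebra_simps)
    also have "\<dots> = ?w \<pi> * exp (\<alpha> * real (length xs)) * exp (-2*\<alpha>) ^ card S"
      by (simp add: exp_of_nat_mult[symmetric] mult_exp_exp algebra_simps)
    finally show ?thesis .
  qed
  have "(\<Sum>\<pi>\<in>F. ?w \<pi>) * exp (\<alpha> * real (length xs)) * (1 + exp (-2*\<alpha>)) ^ (length xs div 2)
      = (\<Sum>\<pi>\<in>F. \<Sum>S\<in>?P. ?w \<pi> * exp (\<alpha> * real (length xs)) * exp (-2*\<alpha>) ^ card S)"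
  proof -
    have "(\<Sum>\<pi>\<in>F. ?w \<pi>) * exp (\<alpha> * real (length xs)) * (1 + exp (-2*\<alpha>)) ^ (length xs div 2)
      = (\<Sum>\<pi>\<in>F. ?w \<pi> * exp (\<alpha> * real (length xs)) * (\<Sum>S\<in>?P. exp (-2*\<alpha>) ^ card S))"
      unfolding sum_pow_card by (simp only: sum_distrib_right)
    also have "\<dots> = (\<Sum>\<pi>\<in>F. \<Sum>S\<in>?P. ?w \<pi> * exp (\<alpha> * real (length xs)) * exp (-2*\<alpha>) ^ card S)"
      by (simp only: sum_distrib_left)
    finally show ?thesis .
  qed
  also have "\<dots> = (\<Sum>\<pi>\<in>F. \<Sum>S\<in>?P. ?w (Phi \<pi> S))"
    by (intro sum.cong refl, rule wphi[symmetric]) auto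
  also have "\<dots> = (\<Sum>(\<pi>,S)\<in>F \<times> ?P. ?w (Phi \<pi> S))"
    by (rule sum.cartesian_product)
  also have "\<dots> = (\<Sum>y\<in>(\<lambda>(\<pi>, S). Phi \<pi> S) ` (F \<times> ?P). ?w y)"
    by (subst sum.reindex[OF Phi_inj]) (simp add: case_prod_beta)
  also have "\<dots> \<le> (\<Sum>y\<in>perms_on E U. ?w y)"
    by (rule sum_mono2[OF finite_perms]) (auto intro: Phi_perms)
  finally show ?thesis unfolding partition_fn_def .
qed

end


lemma orbit_list:
  assumes sg: "simple_graph E" and pp: "\<pi> \<in> perms_on E U" and fU: "finite U" and zU: "z \<in> U"
    and mv: "\<pi> z \<noteq> z"
  defines "n \<equiv> cycle_len \<pi> z"
  defines "\<gamma> \<equiv> map (\<lambda>i. (\<pi>^^i) z) [0..<n]"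
  shows "\<gamma> \<in> SAP E z n" "distinct \<gamma>" "set \<gamma> \<subseteq> U" "length \<gamma> \<ge> 2"
    "\<And>i. Suc i < length \<gamma> \<Longrightarrow> E (\<gamma>!i) (\<gamma>!Suc i)" "\<pi> \<in> F E U \<gamma>"
proof -
  have perm: "\<pi> permutes U" and ed: "\<And>y. y \<in> U \<Longrightarrow> \<pi> y = y \<or> E y (\<pi> y)"
    using pp unfolding perms_on_def by auto
  note of = orbit_facts[OF perm fU zU mv, folded n_def]
  have len: "length \<gamma> = n" unfolding \<gamma>_def by simp
  have nth: "\<And>i. i < n \<Longrightarrow> \<gamma>!i = (\<pi>^^i) z" unfolding \<gamma>_def by simp
  show dist: "distinct \<gamma>" unfolding \<gamma>_def using of(3) by (simp add: distinct_map atLeast0LessThan)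
  show sub: "set \<gamma> \<subseteq> U" unfolding \<gamma>_def using funpow_in_U[OF perm zU] by auto
  show l2: "length \<gamma> \<ge> 2" using of(1) len by simp
  have moves: "\<pi> ((\<pi>^^i) z) \<noteq> (\<pi>^^i) z" if i: "i < n" for i
  proof
    assume h: "\<pi> ((\<pi>^^i) z) = (\<pi>^^i) z"
    show False
    proof (cases "Suc i < n")
      case True
      have "(\<pi>^^Suc i) z = (\<pi>^^i) z" using h by simp
      then show False using inj_onD[OF of(3), of "Suc i" i] True by simp
    next
      case False
      then have "Suc i = n" using i by simp
      have "(\<pi>^^Suc i) z = (\<pi>^^i) z" using h by simp
      then have "(\<pi>^^i) z = (\<pi>^^0) z" using of(2) \<open>Suc i = n\<close> by simp
      moreover have "i \<noteq> 0" using \<open>Suc i = n\<close> of(1) by simp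
      ultimately show False using inj_onD[OF of(3), of i 0] i by simp
    qed
  qed
  have edge: "E ((\<pi>^^i) z) (\<pi> ((\<pi>^^i) z))" if "i < n" for i
    using ed[OF funpow_in_U[OF perm zU, of i]] moves[OF that] by blast
  show path: "E (\<gamma>!i) (\<gamma>!Suc i)" if "Suc i < length \<gamma>" for i
    using edge[of i] that len nth by simp
  have last: "\<pi> (\<gamma>!(n-1)) = \<gamma>!0"
  proof -
    have "\<pi> ((\<pi>^^(n-1)) z) = (\<pi>^^n) z"
    proof -
      have "Suc (n-1) = n" using of(1) by simp
      moreover have "\<pi> ((\<pi>^^(n-1)) z) = (\<pi>^^Suc (n-1)) z" by simp
      ultimately show ?thesis by simp
    qed
    then show ?thesis using nth[of "n-1"] nth[of 0] of(1) of(2) by simp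
  qed
  show "\<gamma> \<in> SAP E z n"
  proof -
    have "E (\<gamma>!(n-1)) (\<gamma>!0)" using edge[of "n-1"] last nth[of "n-1"] of(1) by simp
    moreover have "\<gamma>!0 = z" using nth[of 0] of(1) by simp
    ultimately show ?thesis unfolding SAP_def using len dist path of(1) by auto
  qed
  show "\<pi> \<in> F E U \<gamma>"
  proof -
    have "\<pi> (\<gamma>!i) = \<gamma>!(Suc i mod length \<gamma>)" if "i < length \<gamma>" for i
    proof (cases "Suc i < n")
      case True then show ?thesis using nth len that by simp
    next
      case False
      then have "i = n - 1" "Suc i = n" using that len by auto
      then show ?thesis using last len by simp
    qed
    moreover have symE: "\<And>x y. E x y \<Longrightarrow> E y x" using sg unfolding simple_graph_def by auto
    ultimately show ?thesis using F_def[of E U \<gamma>, OF symE fU dist sub l2 path] pp by auto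
  qed
qed



lemma finite_perms_on: "finite U \<Longrightarrow> finite (perms_on E U)"
  using finite_permutations unfolding perms_on_def by (rule rev_finite_subset) auto

lemma len_bound:
  fixes \<alpha> :: real
  assumes sg: "simple_graph E" and bd: "bounded_degree E" and vt: "vertex_transitive E"
    and fU: "finite U" and zU: "z \<in> U" and n1: "n \<ge> 1"
  shows "(\<Sum>\<pi>\<in>{\<pi>\<in>perms_on E U. cycle_len \<pi> z = n}. exp (- \<alpha> * real (ham U \<pi>)))
          * (exp (\<alpha> * real n) * (1 + exp (-2*\<alpha>)) ^ (n div 2))
         \<le> real (card (SAP E x0 n)) * partition_fn E \<alpha> U"
proof -
  let ?w = "\<lambda>\<pi>. exp (- \<alpha> * real (ham U \<pi>))"
  let ?c = "exp (\<alpha> * real n) * (1 + exp (-2*\<alpha>)) ^ (n div 2)"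
  define A where "A = {\<pi>\<in>perms_on E U. cycle_len \<pi> z = n}"
  define g where "g \<pi> = map (\<lambda>i. (\<pi>^^i) z) [0..<n]" for \<pi> :: "'a \<Rightarrow> 'a"
  have fA: "finite A" unfolding A_def using finite_perms_on[OF fU] by simp
  have symE: "\<And>x y. E x y \<Longrightarrow> E y x" using sg unfolding simple_graph_def by auto
  have Z0: "0 \<le> partition_fn E \<alpha> U" unfolding partition_fn_def by (intro sum_nonneg) simp
  have inA: "\<pi> z \<noteq> z \<and> cycle_len \<pi> z = n \<and> \<pi> \<in> perms_on E U" if "\<pi> \<in> A" for \<pi>
    using that n1 unfolding A_def cycle_len_def by auto
  note ol = orbit_list[OF sg _ fU zU]
  have gA: "g ` A \<subseteq> SAP E z n"
  proof
    fix \<gamma> assume "\<gamma> \<in> g ` A"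
    then obtain \<pi> where "\<pi> \<in> A" "\<gamma> = g \<pi>" by blast
    then show "\<gamma> \<in> SAP E z n" using ol(1)[of \<pi>] inA[of \<pi>] unfolding g_def by auto
  qed
  have fib: "(\<Sum>\<pi>\<in>{\<pi>\<in>A. g \<pi> = \<gamma>}. ?w \<pi>) * ?c \<le> partition_fn E \<alpha> U" if gam: "\<gamma> \<in> g ` A" for \<gamma>
  proof -
    obtain \<pi>0 where p0: "\<pi>0 \<in> A" "\<gamma> = g \<pi>0" using gam by blast
    have h0: "\<pi>0 z \<noteq> z" "cycle_len \<pi>0 z = n" "\<pi>0 \<in> perms_on E U" using inA[OF p0(1)] by auto
    have dist: "distinct \<gamma>" and sub: "set \<gamma> \<subseteq> U" and l2: "length \<gamma> \<ge> 2"
      and path: "\<And>i. Suc i < length \<gamma> \<Longrightarrow> E (\<gamma>!i) (\<gamma>!Suc i)"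
      using ol(2-5)[OF h0(3) h0(1)] h0(2) p0(2) unfolding g_def by auto
    have len: "length \<gamma> = n" using p0(2) unfolding g_def by simp
    have sub2: "{\<pi>\<in>A. g \<pi> = \<gamma>} \<subseteq> F E U \<gamma>"
    proof
      fix \<pi> assume "\<pi> \<in> {\<pi>\<in>A. g \<pi> = \<gamma>}"
      then have "\<pi> \<in> A" "g \<pi> = \<gamma>" by auto
      then show "\<pi> \<in> F E U \<gamma>" using ol(6)[of \<pi>] inA[of \<pi>] unfolding g_def by auto
    qed
    have fF: "finite (F E U \<gamma>)"
      using finite_perms_on[OF fU] F_def[of E U \<gamma>, OF symE fU dist sub l2 path] by simp
    have "(\<Sum>\<pi>\<in>{\<pi>\<in>A. g \<pi> = \<gamma>}. ?w \<pi>) \<le> (\<Sum>\<pi>\<in>F E U \<gamma>. ?w \<pi>)"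
      by (rule sum_mono2[OF fF sub2]) simp
    then have "(\<Sum>\<pi>\<in>{\<pi>\<in>A. g \<pi> = \<gamma>}. ?w \<pi>) * ?c \<le> (\<Sum>\<pi>\<in>F E U \<gamma>. ?w \<pi>) * ?c"
      by (rule mult_right_mono) simp
    also have "\<dots> \<le> partition_fn E \<alpha> U"
      using fiber_bound[of E U \<gamma>, OF symE fU dist sub l2 path, of \<alpha>] len by (simp add: mult.assoc)
    finally show ?thesis .
  qed
  have "(\<Sum>\<pi>\<in>A. ?w \<pi>) * ?c = (\<Sum>\<gamma>\<in>g ` A. (\<Sum>\<pi>\<in>{\<pi>\<in>A. g \<pi> = \<gamma>}. ?w \<pi>) * ?c)"
  proof -
    have e: "(\<Sum>\<pi>\<in>A. ?w \<pi>) = (\<Sum>\<gamma>\<in>g ` A. (\<Sum>\<pi>\<in>{\<pi>\<in>A. g \<pi> = \<gamma>}. ?w \<pi>))"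
      by (rule sum.image_gen[OF fA])
    show ?thesis by (simp only: e sum_distrib_right)
  qed
  also have "\<dots> \<le> (\<Sum>\<gamma>\<in>g ` A. partition_fn E \<alpha> U)"
    by (rule sum_mono) (rule fib)
  also have "\<dots> = real (card (g ` A)) * partition_fn E \<alpha> U" by simp
  also have "\<dots> \<le> real (card (SAP E z n)) * partition_fn E \<alpha> U"
    by (intro mult_right_mono Z0) (simp add: card_mono[OF SAP_finite[OF bd] gA])
  also have "\<dots> \<le> real (card (SAP E x0 n)) * partition_fn E \<alpha> U"
    by (intro mult_right_mono Z0) (simp add: SAP_card_le[OF bd vt])
  finally show ?thesis unfolding A_def .
qed



lemma SAP_growth:
  assumes mu: "cyclic_connective_constant E x0 > 0" and ep: "\<epsilon> > 0"
  shows "\<exists>K>0. \<forall>n. real (card (SAP E x0 n)) \<le> K * (cyclic_connective_constant E x0 + \<epsilon>) ^ n"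
proof -
  define \<mu> where "\<mu> = cyclic_connective_constant E x0"
  define c where "c n = real (card (SAP E x0 n))" for n
  define \<rho> where "\<rho> = \<mu> + \<epsilon>"
  have rp: "\<rho> > 0" using mu ep \<rho>_def \<mu>_def by simp
  define L where "L = limsup (\<lambda>n. ereal (root n (c n)))"
  have muL: "\<mu> = real_of_ereal L" unfolding \<mu>_def L_def c_def cyclic_connective_constant_def by simp
  have "\<bar>L\<bar> \<noteq> \<infinity>" using mu muL \<mu>_def by (cases L) auto
  then have "L = ereal \<mu>" using muL ereal_real' by metis
  then have "L < ereal \<rho>" using ep \<rho>_def by simp
  then have "eventually (\<lambda>n. ereal (root n (c n)) < ereal \<rho>) sequentially"
    unfolding L_def by (rule Limsup_lessD)
  then obtain N where N: "\<And>n. n \<ge> N \<Longrightarrow> root n (c n) < \<rho>"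
    unfolding eventually_sequentially by auto
  define K where "K = 1 + (\<Sum>n\<le>N. c n / \<rho> ^ n)"
  have c0: "c n \<ge> 0" for n unfolding c_def by simp
  have Kp: "K > 0" unfolding K_def using c0 rp by (intro add_pos_nonneg sum_nonneg) auto
  have "c n \<le> K * \<rho> ^ n" for n
  proof (cases "n \<le> N")
    case True
    have "c n / \<rho> ^ n \<le> (\<Sum>n\<le>N. c n / \<rho> ^ n)"
      by (rule member_le_sum) (use True c0 rp in auto)
    then have "c n / \<rho> ^ n \<le> K" unfolding K_def by simp
    then show ?thesis using rp by (simp add: divide_le_eq mult.commute)
  next
    case False
    then have n0: "n > 0" "n \<ge> N" by auto
    have "c n = root n (c n) ^ n" using n0 c0 by simp
    also have "\<dots> \<le> \<rho> ^ n" using N[OF n0(2)] c0[of n] by (intro power_mono) (auto intro: real_root_ge_zero)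
    also have "\<dots> \<le> K * \<rho> ^ n"
    proof -
      have "1 \<le> K" unfolding K_def using c0 rp by (simp add: sum_nonneg)
      then show ?thesis using rp by (simp add: mult_le_cancel_right1)
    qed
    finally show ?thesis .
  qed
  then show ?thesis using Kp unfolding c_def \<rho>_def \<mu>_def by blast
qed



lemma g_alt: "a + ln (1 + exp (-2*a)) / 2 = ln (exp (2*a) + 1) / 2" for a :: real
proof -
  have "exp (2*a) + 1 = exp (2*a) * (1 + exp (-2*a))" by (simp add: algebra_simps exp_minus field_simps)
  moreover have p: "0 < 1 + exp (-2*a)" by (smt (verit) exp_gt_zero)
  ultimately have "ln (exp (2*a) + 1) = 2*a + ln (1 + exp (-2*a))"
    using ln_mult[of "exp (2*a)" "1 + exp (-2*a)"] by simp
  then show ?thesis by simp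
qed

lemma g_mono: "a < b \<Longrightarrow> a + ln (1 + exp (-2*a)) / 2 < b + ln (1 + exp (-2*b)) / 2" for a b :: real
  unfolding g_alt by (simp add: add_pos_pos)

lemma g_ge: "a \<le> a + ln (1 + exp (-2*a)) / 2" for a :: real
  by simp

lemma exp_g_bound:
  fixes a :: real
  shows "exp ((a + ln (1 + exp (-2*a)) / 2) * real n)
         \<le> sqrt (1 + exp (-2*a)) * (exp (a * real n) * (1 + exp (-2*a)) ^ (n div 2))"
proof -
  define x where "x = 1 + exp (-2*a)"
  have x1: "x \<ge> 1" unfolding x_def by simp
  have "exp ((a + ln x / 2) * real n) = exp (a * real n) * x powr (real n / 2)"
    using x1 by (simp add: powr_def algebra_simps exp_add)
  also have "x powr (real n / 2) \<le> x powr (1/2 + real (n div 2))"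
    using x1 by (intro powr_mono) linarith+
  also have "x powr (1/2 + real (n div 2)) = sqrt x * x ^ (n div 2)"
    using x1 by (simp add: powr_add powr_half_sqrt powr_realpow)
  finally show ?thesis unfolding x_def by (simp add: mult_left_mono mult.commute mult.left_commute)
qed

lemma geom_bound:
  fixes q :: real
  assumes q: "0 \<le> q" "q < 1" and fS: "finite S" and Sl: "\<forall>n\<in>S. l < n"
  shows "(\<Sum>n\<in>S. q ^ n) \<le> q ^ Suc l / (1 - q)"
proof -
  obtain M where M: "\<forall>n\<in>S. n < M" using fS finite_nat_bounded by blast
  have sub: "S \<subseteq> (\<lambda>i. Suc l + i) ` {..<M}"
  proof
    fix n assume n: "n \<in> S"
    then have "n = Suc l + (n - Suc l)" "n - Suc l < M" using Sl M by auto
    then show "n \<in> (\<lambda>i. Suc l + i) ` {..<M}" by blast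
  qed
  have "(\<Sum>n\<in>S. q ^ n) \<le> (\<Sum>n\<in>(\<lambda>i. Suc l + i) ` {..<M}. q ^ n)"
    by (rule sum_mono2[OF _ sub]) (use q in auto)
  also have "\<dots> = (\<Sum>i<M. q ^ (Suc l + i))" by (subst sum.reindex) (auto simp: inj_on_def)
  also have "\<dots> = q ^ Suc l * (\<Sum>i<M. q ^ i)" by (simp add: power_add sum_distrib_left mult.assoc)
  also have "\<dots> = q ^ Suc l * ((1 - q ^ M) / (1 - q))" using q by (simp add: sum_gp_strict)
  also have "\<dots> \<le> q ^ Suc l * (1 / (1 - q))"
    using q by (intro mult_left_mono divide_right_mono) auto
  finally show ?thesis by simp
qed



lemma Z_pos: assumes "finite U" shows "partition_fn E \<alpha> U > 0"
proof -
  have idp: "id \<in> perms_on E U" unfolding perms_on_def by (auto simp: permutes_id)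
  have "exp (- \<alpha> * real (ham U id)) \<le> partition_fn E \<alpha> U"
    unfolding partition_fn_def by (rule member_le_sum[OF idp]) (auto simp: finite_perms_on[OF assms])
  moreover have "exp (- \<alpha> * real (ham U id)) > 0" by simp
  ultimately show ?thesis by linarith
qed

lemma tail_bound:
  fixes \<alpha> \<rho> K :: real
  assumes sg: "simple_graph E" and bd: "bounded_degree E" and vt: "vertex_transitive E"
    and fU: "finite U" and zU: "z \<in> U"
    and Kp: "K > 0" and rp: "\<rho> > 0" and hK: "\<forall>n. real (card (SAP E x0 n)) \<le> K * \<rho> ^ n"
    and hq: "\<rho> < exp (\<alpha> + ln (1 + exp (-2*\<alpha>)) / 2)"
  shows "perm_prob E \<alpha> U (\<lambda>\<pi>. cycle_len \<pi> z > l)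
     \<le> (K * sqrt (1 + exp (-2*\<alpha>)) / (1 - exp (- (\<alpha> + ln (1 + exp (-2*\<alpha>)) / 2 - ln \<rho>))))
        * exp (- (\<alpha> + ln (1 + exp (-2*\<alpha>)) / 2 - ln \<rho>) * real l)"
proof -
  define G where "G = \<alpha> + ln (1 + exp (-2*\<alpha>)) / 2"
  define c0 where "c0 = G - ln \<rho>"
  define q where "q = exp (- c0)"
  define s where "s = sqrt (1 + exp (-2*\<alpha>))"
  define Z where "Z = partition_fn E \<alpha> U"
  let ?w = "\<lambda>\<pi>. exp (- \<alpha> * real (ham U \<pi>))"
  define B where "B = {\<pi>\<in>perms_on E U. cycle_len \<pi> z > l}"
  define h where "h \<pi> = cycle_len \<pi> z" for \<pi> :: "'a \<Rightarrow> 'a"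
  have Zp: "Z > 0" unfolding Z_def by (rule Z_pos[OF fU])
  have "ln \<rho> < ln (exp G)" using hq rp unfolding G_def by (subst ln_less_cancel_iff) auto
  then have c0p: "c0 > 0" unfolding c0_def by simp
  have q0: "0 \<le> q" and q1: "q < 1" unfolding q_def using c0p by auto
  have sp: "s > 0" unfolding s_def by (smt (verit) exp_gt_zero real_sqrt_gt_zero)
  have fB: "finite B" unfolding B_def using finite_perms_on[OF fU] by simp
  have rho_eq: "\<rho> ^ n = q ^ n * exp (G * real n)" for n
  proof -
    have "q ^ n * exp (G * real n) = exp (real n * (- c0)) * exp (G * real n)"
      unfolding q_def by (simp add: exp_of_nat_mult[symmetric])
    also have "\<dots> = exp (real n * ln \<rho>)" unfolding c0_def by (simp add: mult_exp_exp algebra_simps)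
    also have "\<dots> = exp (ln \<rho>) ^ n" by (simp add: exp_of_nat_mult)
    also have "\<dots> = \<rho> ^ n" using rp by simp
    finally show ?thesis by simp
  qed
  have Sn: "(\<Sum>\<pi>\<in>{\<pi>\<in>B. h \<pi> = n}. ?w \<pi>) \<le> K * Z * s * q ^ n" if n: "n \<in> h ` B" for n
  proof -
    have nl: "n > l" using n unfolding B_def h_def by auto
    have eqs: "{\<pi>\<in>B. h \<pi> = n} = {\<pi>\<in>perms_on E U. cycle_len \<pi> z = n}"
      unfolding B_def h_def using nl by auto
    define S where "S = (\<Sum>\<pi>\<in>{\<pi>\<in>perms_on E U. cycle_len \<pi> z = n}. ?w \<pi>)"
    define D where "D = exp (\<alpha> * real n) * (1 + exp (-2*\<alpha>)) ^ (n div 2)"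
    have S0: "S \<ge> 0" unfolding S_def by (intro sum_nonneg) simp
    have lb: "S * D \<le> real (card (SAP E x0 n)) * Z"
      unfolding S_def D_def Z_def by (rule len_bound[OF sg bd vt fU zU]) (use nl in simp)
    have eg: "exp (G * real n) \<le> s * D" unfolding G_def s_def D_def by (rule exp_g_bound)
    have "S * exp (G * real n) \<le> S * (s * D)" using eg S0 by (rule mult_left_mono)
    also have "\<dots> = s * (S * D)" by simp
    also have "\<dots> \<le> s * (real (card (SAP E x0 n)) * Z)" using lb sp by simp
    also have "\<dots> \<le> s * (K * \<rho> ^ n * Z)" using hK sp Zp by (intro mult_left_mono mult_right_mono) auto
    also have "\<dots> = (K * Z * s * q ^ n) * exp (G * real n)" by (simp add: rho_eq)
    finally have "S * exp (G * real n) \<le> (K * Z * s * q ^ n) * exp (G * real n)" .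
    then have "S \<le> K * Z * s * q ^ n" by simp
    then show ?thesis using eqs S_def by simp
  qed
  have "(\<Sum>\<pi>\<in>B. ?w \<pi>) = (\<Sum>n\<in>h ` B. (\<Sum>\<pi>\<in>{\<pi>\<in>B. h \<pi> = n}. ?w \<pi>))"
    by (rule sum.image_gen[OF fB])
  also have "\<dots> \<le> (\<Sum>n\<in>h ` B. K * Z * s * q ^ n)" by (rule sum_mono) (rule Sn)
  also have "\<dots> = K * Z * s * (\<Sum>n\<in>h ` B. q ^ n)" by (simp add: sum_distrib_left)
  also have "\<dots> \<le> K * Z * s * (q ^ Suc l / (1 - q))"
    using Kp Zp sp by (intro mult_left_mono geom_bound[OF q0 q1]) (use fB in \<open>auto simp: B_def h_def\<close>)
  also have "\<dots> \<le> K * Z * s * (q ^ l / (1 - q))"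
    using Kp Zp sp q0 q1 by (intro mult_left_mono divide_right_mono) (auto simp: power_le_one mult_left_le_one_le)
  finally have sB: "(\<Sum>\<pi>\<in>B. ?w \<pi>) \<le> Z * ((K * s / (1 - q)) * q ^ l)" by (simp add: algebra_simps)
  have "perm_prob E \<alpha> U (\<lambda>\<pi>. cycle_len \<pi> z > l) = (\<Sum>\<pi>\<in>B. ?w \<pi>) / Z"
    unfolding perm_prob_def B_def Z_def by simp
  also have "\<dots> \<le> (K * s / (1 - q)) * q ^ l" using sB Zp by (simp add: divide_le_eq mult.commute)
  also have "q ^ l = exp (- c0 * real l)" unfolding q_def by (simp add: exp_of_nat_mult[symmetric] mult.commute)
  finally show ?thesis unfolding q_def c0_def G_def s_def .
qed



theorem theorem2p1:
  fixes E :: "'v \<Rightarrow> 'v \<Rightarrow> bool" and x0 :: 'v and \<alpha>0 :: real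
  assumes "simple_graph E"
    and "infinite (UNIV :: 'v set)"
    and "vertex_transitive E"
    and "bounded_degree E"
    and "cyclic_connective_constant E x0 > 0"
    and "\<alpha>0 + ln (1 + exp (- 2 * \<alpha>0)) / 2 = ln (cyclic_connective_constant E x0)"
  shows "\<exists>C0 c0 :: real \<Rightarrow> real.
           (\<forall>\<alpha>>\<alpha>0. C0 \<alpha> > 0 \<and> c0 \<alpha> > 0 \<and>
              (\<forall>U z (l::nat). finite U \<longrightarrow> z \<in> U \<longrightarrow>
                 perm_prob E \<alpha> U (\<lambda>\<pi>. cycle_len \<pi> z > l) \<le> C0 \<alpha> * exp (- c0 \<alpha> * real l)))
         \<and> ((\<lambda>\<alpha>. c0 \<alpha> / \<alpha>) \<longlongrightarrow> 1) at_top
         \<and> (\<exists>M. eventually (\<lambda>\<alpha>. C0 \<alpha> \<le> M) at_top)"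
proof -
  note sg = assms(1) and vt = assms(3) and bd = assms(4)
  define \<mu> where "\<mu> = cyclic_connective_constant E x0"
  have mup: "\<mu> > 0" using assms(5) \<mu>_def by simp
  define G where "G a = a + ln (1 + exp (-2*a)) / 2" for a :: real
  have G0: "G \<alpha>0 = ln \<mu>" using assms(6) unfolding G_def \<mu>_def by simp
  define \<rho> where "\<rho> a = min (\<mu> + 1) ((\<mu> + exp (G a)) / 2)" for a
  define Kf where "Kf e = (SOME K. K > 0 \<and> (\<forall>n. real (card (SAP E x0 n)) \<le> K * (\<mu> + e) ^ n))" for e :: real
  have Kf: "Kf e > 0 \<and> (\<forall>n. real (card (SAP E x0 n)) \<le> Kf e * (\<mu> + e) ^ n)" if "e > 0" for e
    unfolding Kf_def using SAP_growth[OF assms(5) that, folded \<mu>_def] by (rule someI_ex)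
  define c0 where "c0 a = G a - ln (\<rho> a)" for a
  define C0 where "C0 a = Kf (\<rho> a - \<mu>) * sqrt (1 + exp (-2*a)) / (1 - exp (- c0 a))" for a
  have main: "C0 a > 0 \<and> c0 a > 0 \<and>
              (\<forall>U z (l::nat). finite U \<longrightarrow> z \<in> U \<longrightarrow>
                 perm_prob E a U (\<lambda>\<pi>. cycle_len \<pi> z > l) \<le> C0 a * exp (- c0 a * real l))"
    if a: "a > \<alpha>0" for a
  proof -
    have "G \<alpha>0 < G a" unfolding G_def using g_mono[OF a] .
    then have mu_lt: "\<mu> < exp (G a)" using G0 mup by (metis exp_ln exp_less_cancel_iff)
    have rgt: "\<rho> a > \<mu>" unfolding \<rho>_def using mu_lt by simp
    have "(\<mu> + exp (G a)) / 2 < exp (G a)" using mu_lt by simp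
    then have rlt: "\<rho> a < exp (G a)" unfolding \<rho>_def by (simp add: min_less_iff_disj)
    have rp: "\<rho> a > 0" using rgt mup by simp
    have Ka: "Kf (\<rho> a - \<mu>) > 0" "\<forall>n. real (card (SAP E x0 n)) \<le> Kf (\<rho> a - \<mu>) * \<rho> a ^ n"
      using Kf[of "\<rho> a - \<mu>"] rgt by auto
    have "ln (\<rho> a) < ln (exp (G a))" using rlt rp by (subst ln_less_cancel_iff) auto
    then have c0p: "c0 a > 0" unfolding c0_def by simp
    have sp: "sqrt (1 + exp (-2*a)) > 0" by (smt (verit) exp_gt_zero real_sqrt_gt_zero)
    have "exp (- c0 a) < 1" using c0p by simp
    then have C0p: "C0 a > 0" unfolding C0_def using Ka(1) sp by simp
    have "perm_prob E a U (\<lambda>\<pi>. cycle_len \<pi> z > l) \<le> C0 a * exp (- c0 a * real l)"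
      if "finite U" "z \<in> U" for U z and l :: nat
      using tail_bound[OF sg bd vt that Ka(1) rp Ka(2), of a l] rlt
      unfolding C0_def c0_def G_def by simp
    then show ?thesis using C0p c0p by blast
  qed
  define A1 where "A1 = max (max 0 (ln (\<mu> + 2))) (1 + ln (\<mu> + 1))"
  have ev: "\<rho> a = \<mu> + 1" if "a \<ge> A1" for a
  proof -
    have "ln (\<mu> + 2) \<le> a" using that A1_def by simp
    then have "\<mu> + 2 \<le> exp a" using mup by (metis exp_le_cancel_iff exp_ln add_pos_pos zero_less_numeral)
    also have "exp a \<le> exp (G a)" unfolding G_def using g_ge by simp
    finally show ?thesis unfolding \<rho>_def by simp
  qed
  have lim: "((\<lambda>a. c0 a / a) \<longlongrightarrow> 1) at_top"
  proof -
    have "((\<lambda>a::real. (a + ln (1 + exp (-2*a)) / 2 - ln (\<mu> + 1)) / a) \<longlongrightarrow> 1) at_top"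
      by real_asymp
    moreover have "eventually (\<lambda>a. (a + ln (1 + exp (-2*a)) / 2 - ln (\<mu> + 1)) / a = c0 a / a) at_top"
      unfolding eventually_at_top_linorder
    proof (intro exI allI impI)
      fix a assume "a \<ge> A1"
      then show "(a + ln (1 + exp (-2*a)) / 2 - ln (\<mu> + 1)) / a = c0 a / a"
        using ev unfolding c0_def G_def by simp
    qed
    ultimately show ?thesis by (rule Lim_transform_eventually)
  qed
  define Kc where "Kc = Kf 1"
  have bnd: "eventually (\<lambda>a. C0 a \<le> 4 * Kc) at_top"
    unfolding eventually_at_top_linorder
  proof (intro exI allI impI)
    fix a assume a: "a \<ge> A1"
    have r: "\<rho> a = \<mu> + 1" using ev[OF a] .
    have Kc: "Kc > 0" unfolding Kc_def using Kf[of 1] by simp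
    have a0: "a \<ge> 0" and a1: "a \<ge> 1 + ln (\<mu> + 1)" using a A1_def by auto
    have "ln (1 + exp (-2*a)) \<ge> 0" by simp
    then have "c0 a \<ge> 1" unfolding c0_def r G_def using a1 by linarith
    then have "exp (- c0 a) \<le> exp (-1)" by simp
    also have "exp (-1::real) \<le> 1/2"
    proof -
      have "2 \<le> exp (1::real)" using exp_ge_add_one_self[of 1] by simp
      then show ?thesis by (simp add: exp_minus field_simps)
    qed
    finally have d: "1 - exp (- c0 a) \<ge> 1/2" by simp
    have "-2*a \<le> 0" using a0 by simp
    then have x1: "exp (-2*a) \<le> 1" using exp_le_one_iff by blast
    then have "1 + exp (-2*a) \<le> 4" by linarith
    then have "sqrt (1 + exp (-2*a)) \<le> sqrt 4" by (rule real_sqrt_le_mono)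
    then have s2: "sqrt (1 + exp (-2*a)) \<le> 2" by simp
    have "C0 a = Kc * sqrt (1 + exp (-2*a)) / (1 - exp (- c0 a))" unfolding C0_def Kc_def r by simp
    also have "\<dots> \<le> Kc * 2 / (1/2)"
      using Kc s2 d by (intro frac_le mult_left_mono) auto
    finally show "C0 a \<le> 4 * Kc" by simp
  qed
  show ?thesis using main lim bnd by blast
qed

end
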